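(* Let $v \ge 147$ be an integer. Then $\beta(3,v,4) \le v-2$, and \[ \beta(3,v,4) \ge \begin{cases} v-3 & \text{if } v \equiv 0 \text{ or } 1 \pmod 3,\\ v-5 & \text{if } v \equiv 2 \pmod 3. \end{cases} \]
   Context: For integers $v \ge k \ge 2$, a $(v,k)$-packing is a pair $(X,\mathcal{B})$ where $X$ is a set of $v$ points and $\mathcal{B}$ is a set of $k$-subsets of $X$ (blocks) such that every pair of distinct points lies in at most one block. A partial parallel class (PPC) is a set of pairwise disjoint blocks; its size is the number of blocks. A PPC of size $\rho$ is maximum if the packing has no PPC of size $\rho+1$. $\beta(\rho,v,k)$ denotes the maximum number of blocks in a $(v,k)$-packing in which the maximum PPC has size $\rho$. *)

theory Defs
  imports Main
begin

definition is_packing :: "nat \<Rightarrow> nat \<Rightarrow> nat set set \<Rightarrow> bool" where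
  "is_packing v k \<B> \<longleftrightarrow>
     (\<forall>b\<in>\<B>. b \<subseteq> {..<v} \<and> card b = k) \<and>
     (\<forall>x y. x \<noteq> y \<longrightarrow> card {b\<in>\<B>. x \<in> b \<and> y \<in> b} \<le> 1)"

definition is_ppc :: "nat set set \<Rightarrow> nat set set \<Rightarrow> bool" where
  "is_ppc \<B> P \<longleftrightarrow> P \<subseteq> \<B> \<and> pairwise disjnt P"

definition max_ppc_size_is :: "nat set set \<Rightarrow> nat \<Rightarrow> bool" where
  "max_ppc_size_is \<B> \<rho> \<longleftrightarrow>
     (\<exists>P. is_ppc \<B> P \<and> card P = \<rho>) \<and> \<not> (\<exists>P. is_ppc \<B> P \<and> card P = \<rho> + 1)"

definition beta :: "nat \<Rightarrow> nat \<Rightarrow> nat \<Rightarrow> nat" where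
  "beta \<rho> v k = Max {card \<B> | \<B>. is_packing v k \<B> \<and> max_ppc_size_is \<B> \<rho>}"

end

theory Submission
  imports Defs
begin


lemma pk_fin: "is_packing v k B \<Longrightarrow> finite B"
proof -
  assume "is_packing v k B"
  then have "B \<subseteq> Pow {..<v}" unfolding is_packing_def by auto
  then show ?thesis by (rule finite_subset) simp
qed

lemma pk_blk: "is_packing v k B \<Longrightarrow> b \<in> B \<Longrightarrow> b \<subseteq> {..<v} \<and> card b = k"
  unfolding is_packing_def by auto

lemma pk_pair: "is_packing v k B \<Longrightarrow> x \<noteq> y \<Longrightarrow> card {b\<in>B. x \<in> b \<and> y \<in> b} \<le> 1"
  unfolding is_packing_def by auto

lemma pk_lin:
  assumes "is_packing v k B" "b \<in> B" "b' \<in> B" "x \<noteq> y" "x \<in> b" "y \<in> b" "x \<in> b'" "y \<in> b'"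
  shows "b = b'"
proof -
  have f: "finite {b\<in>B. x \<in> b \<and> y \<in> b}" using pk_fin[OF assms(1)] by simp
  have "card {b\<in>B. x \<in> b \<and> y \<in> b} \<le> Suc 0" using pk_pair[OF assms(1,4)] by simp
  then show ?thesis using card_le_Suc0_iff_eq[OF f] assms by blast
qed

lemma avoid:
  assumes "is_packing v k B" "finite X" "p \<notin> X" "card X < card {b\<in>B. p \<in> b}"
  shows "\<exists>b\<in>B. p \<in> b \<and> b \<inter> X = {}"
proof (rule ccontr)
  assume "\<not> ?thesis"
  then have "{b\<in>B. p \<in> b} \<subseteq> (\<Union>x\<in>X. {b\<in>B. p \<in> b \<and> x \<in> b})" by auto
  then have "card {b\<in>B. p \<in> b} \<le> card (\<Union>x\<in>X. {b\<in>B. p \<in> b \<and> x \<in> b})"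
    by (rule card_mono[rotated]) (use pk_fin[OF assms(1)] assms(2) in simp)
  also have "\<dots> \<le> (\<Sum>x\<in>X. card {b\<in>B. p \<in> b \<and> x \<in> b})" by (rule card_UN_le[OF assms(2)])
  also have "\<dots> \<le> (\<Sum>x\<in>X. 1)"
  proof (rule sum_mono)
    fix x assume "x \<in> X"
    then have "p \<noteq> x" using assms(3) by auto
    then show "card {b\<in>B. p \<in> b \<and> x \<in> b} \<le> 1" by (rule pk_pair[OF assms(1)])
  qed
  finally show False using assms(4) by simp
qed

lemma hit:
  assumes "finite B" "finite H" "\<forall>b\<in>B. \<exists>h\<in>H. h \<in> b"
  shows "card B \<le> (\<Sum>h\<in>H. card {b\<in>B. h \<in> b})"
proof -
  have "B \<subseteq> (\<Union>h\<in>H. {b\<in>B. h \<in> b})" using assms(3) by auto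
  then have "card B \<le> card (\<Union>h\<in>H. {b\<in>B. h \<in> b})"
    using assms(1,2) by (intro card_mono) auto
  also have "\<dots> \<le> (\<Sum>h\<in>H. card {b\<in>B. h \<in> b})" by (rule card_UN_le[OF assms(2)])
  finally show ?thesis .
qed

lemma pigeon:
  assumes "finite H" "\<forall>b\<in>P. b \<inter> H \<noteq> {}" "pairwise disjnt P"
  shows "card P \<le> card H"
proof -
  define f where "f b = (SOME h. h \<in> b \<inter> H)" for b :: "'a set"
  have fb: "f b \<in> b \<inter> H" if "b \<in> P" for b
    using assms(2) that unfolding f_def by (metis ex_in_conv someI_ex)
  have "inj_on f P"
  proof (rule inj_onI)
    fix b b' assume "b \<in> P" "b' \<in> P" "f b = f b'"
    then show "b = b'" using fb assms(3) unfolding pairwise_def disjnt_def by (metis IntD1 disjoint_iff)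
  qed
  moreover have "f ` P \<subseteq> H" using fb by auto
  ultimately show ?thesis by (rule card_inj_on_le[OF _ _ assms(1)])
qed

lemma disj_sum:
  assumes "is_packing v k B" "p \<in> P"
  shows "(\<Sum>b\<in>{b\<in>B. p \<in> b}. card (b - P)) \<le> card ({..<v} - P)"
proof -
  have fB: "finite B" by (rule pk_fin[OF assms(1)])
  have "(\<Sum>b\<in>{b\<in>B. p \<in> b}. card (b - P)) = card (\<Union>b\<in>{b\<in>B. p \<in> b}. b - P)"
  proof (rule card_UN_disjoint[symmetric])
    show "finite {b\<in>B. p \<in> b}" using fB by simp
    show "\<forall>b\<in>{b\<in>B. p \<in> b}. finite (b - P)"
      using pk_blk[OF assms(1)] by (auto intro: finite_subset)
    show "\<forall>b\<in>{b\<in>B. p \<in> b}. \<forall>b'\<in>{b\<in>B. p \<in> b}. b \<noteq> b' \<longrightarrow> (b - P) \<inter> (b' - P) = {}"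
    proof (intro ballI impI)
      fix b b' assume "b \<in> {b\<in>B. p \<in> b}" "b' \<in> {b\<in>B. p \<in> b}" "b \<noteq> b'"
      show "(b - P) \<inter> (b' - P) = {}"
      proof (rule ccontr)
        assume "(b - P) \<inter> (b' - P) \<noteq> {}"
        then obtain x where x: "x \<in> b" "x \<in> b'" "x \<notin> P" by auto
        have "x \<noteq> p" using x(3) assms(2) by auto
        then have "b = b'" using pk_lin[OF assms(1), of b b' x p] x \<open>b \<in> {b\<in>B. p \<in> b}\<close> \<open>b' \<in> {b\<in>B. p \<in> b}\<close> by simp
        then show False using \<open>b \<noteq> b'\<close> by simp
      qed
    qed
  qed
  also have "\<dots> \<le> card ({..<v} - P)"
    using pk_blk[OF assms(1)] by (intro card_mono) auto
  finally show ?thesis .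
qed

lemma deg_bound:
  assumes "is_packing v 4 B"
  shows "3 * card {b\<in>B. p \<in> b} \<le> v - 1"
proof (cases "{b\<in>B. p \<in> b} = {}")
  case True then show ?thesis unfolding True by simp
next
  case False
  then obtain b0 where "b0 \<in> B" "p \<in> b0" by auto
  then have pv: "p < v" using pk_blk[OF assms] by auto
  have "(\<Sum>b\<in>{b\<in>B. p \<in> b}. card (b - {p})) = (\<Sum>b\<in>{b\<in>B. p \<in> b}. 3)"
    using pk_blk[OF assms] by (intro sum.cong) (auto simp: card_Diff_singleton)
  then have "3 * card {b\<in>B. p \<in> b} \<le> card ({..<v} - {p})"
    using disj_sum[OF assms, of p "{p}"] by simp
  then show ?thesis using pv by simp
qed



lemma cover3:
  assumes pk: "is_packing v 4 B" and Pv: "P \<subseteq> {..<v}" and cP: "card P = 3"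
    and hitP: "\<forall>b\<in>B. b \<inter> P \<noteq> {}"
  shows "card B \<le> v - 3"
proof -
  have fB: "finite B" by (rule pk_fin[OF pk])
  have fP: "finite P" using cP by (metis card.infinite zero_neq_numeral)
  have key: "3 \<le> card (b \<inter> P) * card (b - P)" if "b \<in> B" for b
  proof -
    have fb: "finite b" and cb: "card b = 4" using pk_blk[OF pk that] by (auto intro: finite_subset)
    have s: "card (b \<inter> P) + card (b - P) = 4" using card_Int_Diff[OF fb, of P] cb by simp
    have "card (b \<inter> P) \<noteq> 0" using hitP that fb by auto
    moreover have "card (b \<inter> P) \<le> 3" using card_mono[OF fP, of "b \<inter> P"] cP by auto
    ultimately have "card (b \<inter> P) = 1 \<or> card (b \<inter> P) = 2 \<or> card (b \<inter> P) = 3" by auto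
    then show ?thesis using s by auto
  qed
  have "3 * card B = (\<Sum>b\<in>B. 3)" by simp
  also have "\<dots> \<le> (\<Sum>b\<in>B. card (b \<inter> P) * card (b - P))" using key by (intro sum_mono) auto
  also have "\<dots> = (\<Sum>b\<in>B. \<Sum>p\<in>P. if p \<in> b then card (b - P) else 0)"
  proof (rule sum.cong[OF refl])
    fix b assume "b \<in> B"
    have "(\<Sum>p\<in>P. if p \<in> b then card (b - P) else 0) = (\<Sum>p\<in>P \<inter> b. card (b - P))"
      by (rule sum.inter_restrict[OF fP, symmetric])
    also have "\<dots> = card (b \<inter> P) * card (b - P)" by (simp add: Int_commute)
    finally show "card (b \<inter> P) * card (b - P) = (\<Sum>p\<in>P. if p \<in> b then card (b - P) else 0)" by simp
  qed
  also have "\<dots> = (\<Sum>p\<in>P. \<Sum>b\<in>B. if p \<in> b then card (b - P) else 0)" by (rule sum.swap)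
  also have "\<dots> = (\<Sum>p\<in>P. \<Sum>b\<in>{b\<in>B. p \<in> b}. card (b - P))"
    by (rule sum.cong[OF refl]) (rule sum.inter_filter[OF fB, symmetric])
  also have "\<dots> \<le> (\<Sum>p\<in>P. card ({..<v} - P))"
    by (rule sum_mono) (rule disj_sum[OF pk])
  also have "\<dots> = 3 * (v - 3)" using cP Pv by (simp add: card_Diff_subset fP)
  finally show ?thesis by simp
qed

lemma intersecting16:
  assumes pk: "is_packing v 4 B" and FB: "F \<subseteq> B"
    and inter: "\<forall>b\<in>F. \<forall>b'\<in>F. b \<inter> b' \<noteq> {}"
    and nostar: "\<forall>r. \<exists>b\<in>F. r \<notin> b"
  shows "card F \<le> 16"
proof (cases "F = {}")
  case True then show ?thesis by simp
next
  case False
  then obtain E where E: "E \<in> F" by auto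
  have fB: "finite B" by (rule pk_fin[OF pk])
  have fF: "finite F" using FB fB by (rule finite_subset)
  have cE: "card E = 4" and fE: "finite E" using pk_blk[OF pk] E FB by (auto intro: finite_subset)
  have each: "card {b\<in>F. x \<in> b} \<le> 4" for x
  proof -
    obtain G where G: "G \<in> F" "x \<notin> G" using nostar by blast
    have cG: "card G = 4" and fG: "finite G" using pk_blk[OF pk] G FB by (auto intro: finite_subset)
    have "{b\<in>F. x \<in> b} \<subseteq> (\<Union>y\<in>G. {b\<in>B. x \<in> b \<and> y \<in> b})"
      using inter G FB by blast
    then have "card {b\<in>F. x \<in> b} \<le> card (\<Union>y\<in>G. {b\<in>B. x \<in> b \<and> y \<in> b})"
      by (rule card_mono[rotated]) (use fB fG in simp)
    also have "\<dots> \<le> (\<Sum>y\<in>G. card {b\<in>B. x \<in> b \<and> y \<in> b})" by (rule card_UN_le[OF fG])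
    also have "\<dots> \<le> (\<Sum>y\<in>G. 1)"
    proof (rule sum_mono)
      fix y assume "y \<in> G"
      then have "x \<noteq> y" using G by auto
      then show "card {b\<in>B. x \<in> b \<and> y \<in> b} \<le> 1" by (rule pk_pair[OF pk])
    qed
    finally show ?thesis using cG by simp
  qed
  have "F \<subseteq> (\<Union>x\<in>E. {b\<in>F. x \<in> b})" using inter E by blast
  then have "card F \<le> card (\<Union>x\<in>E. {b\<in>F. x \<in> b})"
    by (rule card_mono[rotated]) (use fF fE in simp)
  also have "\<dots> \<le> (\<Sum>x\<in>E. card {b\<in>F. x \<in> b})" by (rule card_UN_le[OF fE])
  also have "\<dots> \<le> (\<Sum>x\<in>E. 4)" using each by (intro sum_mono) auto
  finally show ?thesis using cE by simp
qed



lemma no_four: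
  assumes no4: "\<not> (\<exists>P. is_ppc B P \<and> card P = 4)"
    and m: "a \<in> B" "b \<in> B" "c \<in> B" "d \<in> B"
    and ne: "a \<noteq> {}" "b \<noteq> {}" "c \<noteq> {}" "d \<noteq> {}"
    and dj: "a \<inter> b = {}" "a \<inter> c = {}" "a \<inter> d = {}" "b \<inter> c = {}" "b \<inter> d = {}" "c \<inter> d = {}"
  shows False
proof -
  have ds: "a \<noteq> b" "a \<noteq> c" "a \<noteq> d" "b \<noteq> c" "b \<noteq> d" "c \<noteq> d" using ne dj by auto
  have "is_ppc B {a, b, c, d}"
    unfolding is_ppc_def pairwise_def disjnt_def using m dj by (auto simp: Int_commute)
  moreover have "card {a, b, c, d} = 4" using ds by simp
  ultimately show False using no4 by blast
qed

lemma card_union_blocks: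
  assumes pk: "is_packing v 4 B" and "Q \<subseteq> B"
  shows "card (\<Union>Q) \<le> 4 * card Q"
proof -
  have "card (\<Union>Q) \<le> sum card Q" by (rule card_Union_le_sum_card)
  also have "\<dots> = sum (\<lambda>_. 4) Q" using pk_blk[OF pk] assms(2) by (intro sum.cong) auto
  finally show ?thesis by simp
qed

lemma upper:
  assumes pk: "is_packing v 4 B" and mp: "max_ppc_size_is B 3" and v: "v \<ge> 147"
  shows "card B \<le> v - 2"
proof -
  have fB: "finite B" by (rule pk_fin[OF pk])
  obtain P0 where P0: "is_ppc B P0" "card P0 = 3" using mp unfolding max_ppc_size_is_def by blast
  have no4: "\<not> (\<exists>P. is_ppc B P \<and> card P = 4)" using mp unfolding max_ppc_size_is_def by simp
  have blk: "b \<subseteq> {..<v}" "card b = 4" "finite b" "b \<noteq> {}" if "b \<in> B" for b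
    using pk_blk[OF pk that] by (auto intro: finite_subset)
  define deg where "deg p = card {b\<in>B. p \<in> b}" for p
  have degb: "3 * deg p \<le> v - 1" for p unfolding deg_def by (rule deg_bound[OF pk])
  show ?thesis
  proof (cases "\<exists>p0. deg p0 \<ge> 13")
    case False
    have d12: "deg p \<le> 12" for p
    proof -
      have "\<not> 13 \<le> deg p" using False by blast
      then show ?thesis by simp
    qed
    define H where "H = \<Union>P0"
    have P0B: "P0 \<subseteq> B" using P0 unfolding is_ppc_def by simp
    have fP0: "finite P0" using P0B fB by (rule finite_subset)
    have fH: "finite H" unfolding H_def by (rule finite_Union[OF fP0]) (use P0B blk(3) in blast)
    have cH: "card H \<le> 12" unfolding H_def using card_union_blocks[OF pk P0B] P0 by simp
    have hits: "\<forall>b\<in>B. \<exists>h\<in>H. h \<in> b"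
    proof
      fix b assume bB: "b \<in> B"
      show "\<exists>h\<in>H. h \<in> b"
      proof (rule ccontr)
        assume nh: "\<not> ?thesis"
        have "b \<notin> P0" using nh blk(4)[OF bB] unfolding H_def by auto
        have "is_ppc B (insert b P0)"
          using P0(1) bB nh unfolding is_ppc_def H_def pairwise_insert disjnt_def by auto
        moreover have "card (insert b P0) = 4" using \<open>b \<notin> P0\<close> fP0 P0(2) by simp
        ultimately show False using no4 by blast
      qed
    qed
    have "card B \<le> (\<Sum>h\<in>H. deg h)" unfolding deg_def by (rule hit[OF fB fH hits])
    also have "\<dots> \<le> (\<Sum>h\<in>H. 12)" using d12 by (intro sum_mono) auto
    also have "\<dots> \<le> 144" using cH by simp
    finally show ?thesis using v by simp
  next
    case True
    then obtain p0 where p0: "deg p0 \<ge> 13" by blast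
    show ?thesis
    proof (cases "\<exists>q. q \<noteq> p0 \<and> deg q \<ge> 10")
      case False
      have d9: "deg q \<le> 9" if "q \<noteq> p0" for q
      proof -
        have "\<not> 10 \<le> deg q" using False that by blast
        then show ?thesis by simp
      qed
      define B' where "B' = {b\<in>B. p0 \<notin> b}"
      define QQ where "QQ = {Q. Q \<subseteq> B' \<and> pairwise disjnt Q}"
      have fB': "finite B'" unfolding B'_def using fB by simp
      have "QQ \<subseteq> Pow B'" unfolding QQ_def by auto
      then have fQQ: "finite QQ" by (rule finite_subset) (simp add: fB')
      have "{} \<in> QQ" unfolding QQ_def by simp
      then have ne: "card ` QQ \<noteq> {}" by auto
      have "Max (card ` QQ) \<in> card ` QQ" using fQQ ne by (intro Max_in) auto
      then obtain Q where Q: "Q \<in> QQ" "card Q = Max (card ` QQ)" by auto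
      have Qmax: "card Q' \<le> card Q" if "Q' \<in> QQ" for Q' using Q(2) fQQ that by simp
      have QB': "Q \<subseteq> B'" and Qdj: "pairwise disjnt Q" using Q(1) unfolding QQ_def by auto
      have QB: "Q \<subseteq> B" using QB' unfolding B'_def by auto
      have fQ: "finite Q" using QB' fB' by (rule finite_subset)
      have cQ: "card Q \<le> 2"
      proof (rule ccontr)
        assume "\<not> card Q \<le> 2"
        then obtain Q3 where Q3: "Q3 \<subseteq> Q" "card Q3 = 3" "finite Q3"
          using obtain_subset_with_card_n[of 3 Q] by auto
        define X where "X = \<Union>Q3"
        have Q3B: "Q3 \<subseteq> B" using Q3 QB by auto
        have cX: "card X \<le> 12" unfolding X_def using card_union_blocks[OF pk Q3B] Q3 by simp
        have fX: "finite X" unfolding X_def by (rule finite_Union[OF Q3(3)]) (use Q3B blk(3) in blast)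
        have p0X: "p0 \<notin> X" unfolding X_def using Q3 QB' unfolding B'_def by auto
        have "card X < card {b\<in>B. p0 \<in> b}" using cX p0 unfolding deg_def by simp
        then obtain D where D: "D \<in> B" "p0 \<in> D" "D \<inter> X = {}"
          using avoid[OF pk fX p0X] by blast
        have "D \<notin> Q3" using D(2) Q3 QB' unfolding B'_def by auto
        have "is_ppc B (insert D Q3)"
        proof -
          have "pairwise disjnt Q3" using Qdj Q3(1) by (rule pairwise_subset)
          moreover have "\<forall>y\<in>Q3. y \<noteq> D \<longrightarrow> disjnt D y \<and> disjnt y D"
            using D(3) unfolding X_def disjnt_def by blast
          ultimately show ?thesis unfolding is_ppc_def using D(1) Q3B by (simp add: pairwise_insert)
        qed
        moreover have "card (insert D Q3) = 4" using \<open>D \<notin> Q3\<close> Q3 by simp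
        ultimately show False using no4 by blast
      qed
      define H where "H = \<Union>Q"
      have fH: "finite H" unfolding H_def by (rule finite_Union[OF fQ]) (use QB blk(3) in blast)
      have cH: "card H \<le> 8" unfolding H_def using card_union_blocks[OF pk QB] cQ by simp
      have p0H: "p0 \<notin> H" unfolding H_def using QB' unfolding B'_def by auto
      have hits: "\<forall>b\<in>B'. \<exists>h\<in>H. h \<in> b"
      proof
        fix b assume bB: "b \<in> B'"
        show "\<exists>h\<in>H. h \<in> b"
        proof (rule ccontr)
          assume nh: "\<not> ?thesis"
          have bB0: "b \<in> B" using bB unfolding B'_def by simp
          have "b \<notin> Q" using nh blk(4)[OF bB0] unfolding H_def by auto
          have "\<forall>y\<in>Q. y \<noteq> b \<longrightarrow> disjnt b y \<and> disjnt y b"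
            using nh unfolding H_def disjnt_def by blast
          then have "insert b Q \<in> QQ" using Q(1) bB unfolding QQ_def by (simp add: pairwise_insert)
          then have "card (insert b Q) \<le> card Q" by (rule Qmax)
          then show False using \<open>b \<notin> Q\<close> fQ by simp
        qed
      qed
      have "B \<subseteq> {b\<in>B. p0 \<in> b} \<union> B'" unfolding B'_def by auto
      then have "card B \<le> card ({b\<in>B. p0 \<in> b} \<union> B')" using fB fB' by (intro card_mono) auto
      also have "\<dots> \<le> deg p0 + card B'" unfolding deg_def by (rule card_Un_le)
      also have "card B' \<le> (\<Sum>h\<in>H. card {b\<in>B'. h \<in> b})" by (rule hit[OF fB' fH hits])
      also have "\<dots> \<le> (\<Sum>h\<in>H. 9)"
      proof (rule sum_mono)
        fix h assume "h \<in> H"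
        then have "h \<noteq> p0" using p0H by auto
        then have "deg h \<le> 9" by (rule d9)
        moreover have "card {b\<in>B'. h \<in> b} \<le> deg h"
          unfolding deg_def B'_def using fB by (intro card_mono) auto
        ultimately show "card {b\<in>B'. h \<in> b} \<le> 9" by simp
      qed
      also have "\<dots> \<le> 72" using cH by simp
      finally have "card B \<le> deg p0 + 72" by simp
      then show ?thesis using degb[of p0] v by simp
    next
      case True
      then obtain q where q: "q \<noteq> p0" "deg q \<ge> 10" by blast
      define F where "F = {b\<in>B. p0 \<notin> b \<and> q \<notin> b}"
      have FB: "F \<subseteq> B" unfolding F_def by auto
      have inter: "\<forall>b\<in>F. \<forall>b'\<in>F. b \<inter> b' \<noteq> {}"
      proof (intro ballI)
        fix b b' assume bF: "b \<in> F" and b'F: "b' \<in> F"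
        show "b \<inter> b' \<noteq> {}"
        proof
          assume dj: "b \<inter> b' = {}"
          have bB: "b \<in> B" and b'B: "b' \<in> B" using bF b'F FB by auto
          define X1 where "X1 = insert p0 (b \<union> b')"
          have fX1: "finite X1" unfolding X1_def using blk(3)[OF bB] blk(3)[OF b'B] by simp
          have cX1: "card X1 \<le> 9"
          proof -
            have "card X1 \<le> Suc (card (b \<union> b'))" unfolding X1_def by (rule card_insert_le_m1) simp_all
            also have "card (b \<union> b') \<le> card b + card b'" by (rule card_Un_le)
            finally show ?thesis using blk bB b'B by simp
          qed
          have qX1: "q \<notin> X1" unfolding X1_def using q(1) bF b'F unfolding F_def by auto
          have "card X1 < card {b\<in>B. q \<in> b}" using cX1 q(2) unfolding deg_def by simp
          then obtain D1 where D1: "D1 \<in> B" "q \<in> D1" "D1 \<inter> X1 = {}"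
            using avoid[OF pk fX1 qX1] by blast
          define X2 where "X2 = b \<union> b' \<union> D1"
          have fX2: "finite X2" unfolding X2_def using blk(3)[OF bB] blk(3)[OF b'B] blk(3)[OF D1(1)] by simp
          have cX2: "card X2 \<le> 12"
          proof -
            have "card X2 \<le> card (b \<union> b') + card D1" unfolding X2_def by (rule card_Un_le)
            also have "card (b \<union> b') \<le> card b + card b'" by (rule card_Un_le)
            finally show ?thesis using blk bB b'B D1 by simp
          qed
          have p0X2: "p0 \<notin> X2" unfolding X2_def using bF b'F D1(3) unfolding F_def X1_def by auto
          have "card X2 < card {b\<in>B. p0 \<in> b}" using cX2 p0 unfolding deg_def by simp
          then obtain D2 where D2: "D2 \<in> B" "p0 \<in> D2" "D2 \<inter> X2 = {}"
            using avoid[OF pk fX2 p0X2] by blast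
          have e1: "b \<inter> D1 = {}" "b' \<inter> D1 = {}" using D1(3) unfolding X1_def by blast+
          have e2: "b \<inter> D2 = {}" "b' \<inter> D2 = {}" "D1 \<inter> D2 = {}" using D2(3) unfolding X2_def by blast+
          show False
            by (rule no_four[OF no4 bB b'B D1(1) D2(1) blk(4)[OF bB] blk(4)[OF b'B] blk(4)[OF D1(1)] blk(4)[OF D2(1)]
               dj e1(1) e2(1) e1(2) e2(2) e2(3)])
        qed
      qed
      show ?thesis
      proof (cases "card F \<le> 16")
        case True
        have "B \<subseteq> {b\<in>B. p0 \<in> b} \<union> {b\<in>B. q \<in> b} \<union> F" unfolding F_def by auto
        then have "card B \<le> card ({b\<in>B. p0 \<in> b} \<union> {b\<in>B. q \<in> b} \<union> F)" using fB FB finite_subset[OF FB fB] by (intro card_mono) auto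
        also have "\<dots> \<le> card ({b\<in>B. p0 \<in> b} \<union> {b\<in>B. q \<in> b}) + card F" by (rule card_Un_le)
        also have "card ({b\<in>B. p0 \<in> b} \<union> {b\<in>B. q \<in> b}) \<le> deg p0 + deg q" unfolding deg_def by (rule card_Un_le)
        finally have "card B \<le> deg p0 + deg q + 16" using True by simp
        then show ?thesis using degb[of p0] degb[of q] v by simp
      next
        case False
        then obtain r where r: "\<forall>b\<in>F. r \<in> b" using intersecting16[OF pk FB inter] by blast
        from False have "F \<noteq> {}" by auto
        then obtain b0 where b0: "b0 \<in> F" by auto
        have rv: "r < v" and rp: "r \<noteq> p0" "r \<noteq> q" using r b0 blk FB unfolding F_def by auto
        have "deg p0 \<noteq> 0" "deg q \<noteq> 0" using p0 q by auto
        then have "{b\<in>B. p0 \<in> b} \<noteq> {}" "{b\<in>B. q \<in> b} \<noteq> {}" unfolding deg_def by (metis card.empty)+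
        then obtain c1 c2 where "c1 \<in> B" "p0 \<in> c1" "c2 \<in> B" "q \<in> c2" by blast
        then have pv: "p0 < v" "q < v" using blk by auto
        have "card B \<le> v - 3"
        proof (rule cover3[OF pk, of "{p0, q, r}"])
          show "{p0, q, r} \<subseteq> {..<v}" using pv rv by auto
          show "card {p0, q, r} = 3" using q(1) rp by auto
          show "\<forall>b\<in>B. b \<inter> {p0, q, r} \<noteq> {}" using r unfolding F_def by auto
        qed
        then show ?thesis by simp
      qed
    qed
  qed
qed



definition blk :: "nat \<Rightarrow> nat \<Rightarrow> nat \<Rightarrow> nat set" where
  "blk m i a = insert i ((\<lambda>l. 3 + l*m + (a + l*i) mod m) ` {..<3})"

definition Cns :: "nat \<Rightarrow> nat set set" where
  "Cns m = (\<lambda>(i,a). blk m i a) ` ({..<3} \<times> {..<m})"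

definition Ext :: "nat \<Rightarrow> nat set" where
  "Ext m = {0, 1, 2, 3 + 3*m}"

lemma modeq_dvd: "(x::nat) mod m = y mod m \<Longrightarrow> int m dvd int x - int y"
proof -
  assume h: "x mod m = y mod m"
  have "int (x mod m) = int (y mod m)" using h by simp
  then have "int x mod int m = int y mod int m" by (simp add: zmod_int)
  then show ?thesis by (simp add: mod_eq_dvd_iff)
qed
lemma small_dvd: "int m dvd k \<Longrightarrow> \<bar>k\<bar> < int m \<Longrightarrow> k = 0"
  using dvd_imp_le_int[of k "int m"] by auto
lemma three_cases: "(l::nat) < 3 \<Longrightarrow> l = 0 \<or> l = 1 \<or> l = 2" by auto
lemma layer_bound: "(l::nat) < 3 \<Longrightarrow> 0 < m \<Longrightarrow> 3 + l*m + t mod m < 3 + 3*m"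
proof -
  assume "l < 3" "0 < m"
  then have "t mod m < m" by simp
  then show ?thesis using three_cases[OF \<open>l < 3\<close>] by auto
qed
lemma decode:
  assumes "l < 3" "l' < 3" "t < m" "t' < m" "3 + l*m + t = 3 + l'*m + (t'::nat)"
  shows "l = l' \<and> t = t'"
  using three_cases[OF assms(1)] three_cases[OF assms(2)] assms by auto

lemma core:
  fixes m i j a c l1 l2 :: nat
  assumes m: "5 \<le> m" and ij: "i < 3" "j < 3" and ac: "a < m" "c < m"
    and l: "l1 < 3" "l2 < 3" "l1 \<noteq> l2"
    and e1: "(a + l1*i) mod m = (c + l1*j) mod m"
    and e2: "(a + l2*i) mod m = (c + l2*j) mod m"
  shows "i = j \<and> a = c"
proof -
  have d1: "int m dvd int (a + l1*i) - int (c + l1*j)" by (rule modeq_dvd[OF e1])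
  have d2: "int m dvd int (a + l2*i) - int (c + l2*j)" by (rule modeq_dvd[OF e2])
  have "int m dvd (int (a + l1*i) - int (c + l1*j)) - (int (a + l2*i) - int (c + l2*j))"
    using d1 d2 by (rule dvd_diff)
  moreover have "(int (a + l1*i) - int (c + l1*j)) - (int (a + l2*i) - int (c + l2*j))
      = (int l1 - int l2) * (int i - int j)" by (simp add: algebra_simps)
  ultimately have d: "int m dvd (int l1 - int l2) * (int i - int j)" by simp
  have "\<bar>(int l1 - int l2) * (int i - int j)\<bar> \<le> 4"
    using three_cases[OF l(1)] three_cases[OF l(2)] three_cases[OF ij(1)] three_cases[OF ij(2)]
    by auto
  then have "(int l1 - int l2) * (int i - int j) = 0" using small_dvd[OF d] m by simp
  then have ieq: "i = j" using l(3) by simp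
  then have "int m dvd int a - int c" using d1 by simp
  moreover have "\<bar>int a - int c\<bar> < int m" using ac by auto
  ultimately have "int a - int c = 0" by (rule small_dvd)
  then show ?thesis using ieq by simp
qed

lemma mem_blk: "x \<in> blk m i a \<longleftrightarrow> x = i \<or> (\<exists>l<3. x = 3 + l*m + (a + l*i) mod m)"
  unfolding blk_def by auto

lemma blk_lin:
  assumes m: "5 \<le> m" and ij: "i < 3" "j < 3" and ac: "a < m" "c < m"
    and xy: "x \<noteq> y" "x \<in> blk m i a" "y \<in> blk m i a" "x \<in> blk m j c" "y \<in> blk m j c"
  shows "i = j \<and> a = c"
proof -
  have mp: "0 < m" using m by simp
  have apx: "z = k" if "z \<in> blk m k e" "z < 3" for z k e
    using that unfolding mem_blk by auto
  have sameapex: "i = j \<and> a = c" if P: "z \<in> blk m i a" "z \<in> blk m j c" "z < 3"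
       "w \<in> blk m i a" "w \<in> blk m j c" "w \<noteq> z" for z w
  proof -
    have "i = j" using apx[OF P(1) P(3)] apx[OF P(2) P(3)] by simp
    have "w \<noteq> i" using apx[OF P(1) P(3)] P(6) by simp
    then obtain l where l: "l < 3" "w = 3 + l*m + (a + l*i) mod m" using P(4) unfolding mem_blk by auto
    have "w \<noteq> j" using \<open>w \<noteq> i\<close> \<open>i = j\<close> by simp
    then obtain l' where l': "l' < 3" "w = 3 + l'*m + (c + l'*j) mod m" using P(5) unfolding mem_blk by auto
    have "l = l' \<and> (a + l*i) mod m = (c + l'*j) mod m"
      by (rule decode[of l l' "(a + l*i) mod m" m "(c + l'*j) mod m"]) (use mp l l' in simp_all)
    then have "(a + l*i) mod m = (c + l*i) mod m" using \<open>i = j\<close> by (metis)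
    then have "int m dvd int (a + l*i) - int (c + l*i)" by (rule modeq_dvd)
    then have "int m dvd int a - int c" by simp
    moreover have "\<bar>int a - int c\<bar> < int m" using ac by auto
    ultimately have "int a - int c = 0" by (rule small_dvd)
    then show ?thesis using \<open>i = j\<close> by simp
  qed
  show ?thesis
  proof (cases "x < 3 \<or> y < 3")
    case True
    then show ?thesis
    proof
      assume "x < 3"
      then show ?thesis using sameapex[of x y] xy by simp
    next
      assume "y < 3"
      then show ?thesis using sameapex[of y x] xy by simp
    qed
  next
    case False
    then have "x \<noteq> i" "x \<noteq> j" "y \<noteq> i" "y \<noteq> j" using ij by auto
    note nn = this
    obtain l1 where L1: "l1 < 3" "x = 3 + l1*m + (a + l1*i) mod m" using xy(2) nn(1) unfolding mem_blk by blast
    obtain l1' where L1': "l1' < 3" "x = 3 + l1'*m + (c + l1'*j) mod m" using xy(4) nn(2) unfolding mem_blk by blast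
    obtain l2 where L2: "l2 < 3" "y = 3 + l2*m + (a + l2*i) mod m" using xy(3) nn(3) unfolding mem_blk by blast
    obtain l2' where L2': "l2' < 3" "y = 3 + l2'*m + (c + l2'*j) mod m" using xy(5) nn(4) unfolding mem_blk by blast
    note L = L1 L1' L2 L2'
    have A: "l1 = l1' \<and> (a + l1*i) mod m = (c + l1'*j) mod m"
      by (rule decode[of l1 l1' "(a + l1*i) mod m" m "(c + l1'*j) mod m"]) (use mp L in simp_all)
    have B: "l2 = l2' \<and> (a + l2*i) mod m = (c + l2'*j) mod m"
      by (rule decode[of l2 l2' "(a + l2*i) mod m" m "(c + l2'*j) mod m"]) (use mp L in simp_all)
    have "l1 \<noteq> l2" using L xy(1) by auto
    moreover have "l1 = l1'" "l2 = l2'" using A B by simp_all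
    ultimately show ?thesis using core[OF m ij ac L(1) L(5)] A B by metis
  qed
qed



lemma lt3: "{..<3::nat} = {0,1,2}" by auto

lemma blk_explicit: "blk m i a = {i, 3 + a mod m, 3 + m + (a+i) mod m, 3 + 2*m + (a+2*i) mod m}"
  unfolding blk_def lt3 by simp

lemma blk_sub: "0 < m \<Longrightarrow> i < 3 \<Longrightarrow> blk m i a \<subseteq> {..<3+3*m}"
  unfolding blk_def using layer_bound by auto

lemma blk_apex: "x < 3 \<Longrightarrow> x \<in> blk m i a \<Longrightarrow> x = i"
  unfolding mem_blk by auto

lemma blk_card: assumes "0 < m" "i < 3" shows "card (blk m i a) = 4"
proof -
  have h: "a mod m < m" "(a+i) mod m < m" "(a+2*i) mod m < m" using assms by simp_all
  have d: "i \<noteq> 3 + a mod m" "i \<noteq> 3 + m + (a+i) mod m" "i \<noteq> 3 + 2*m + (a+2*i) mod m"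
    "3 + a mod m \<noteq> 3 + m + (a+i) mod m" "3 + a mod m \<noteq> 3 + 2*m + (a+2*i) mod m"
    "3 + m + (a+i) mod m \<noteq> 3 + 2*m + (a+2*i) mod m" using h assms(2) apply - apply linarith+ done
  then show ?thesis unfolding blk_explicit by simp
qed

lemma Ext_card: "card (Ext m) = 4" unfolding Ext_def by simp

lemma Ext_sub: "Ext m \<subseteq> {..<4+3*m}" unfolding Ext_def by auto

lemma Ext_not_blk: "0 < m \<Longrightarrow> i < 3 \<Longrightarrow> x \<in> Ext m \<Longrightarrow> x \<in> blk m i a \<Longrightarrow> x = i"
proof -
  assume m: "0 < m" and i: "i < 3" and x: "x \<in> Ext m" "x \<in> blk m i a"
  have "x \<noteq> 3 + 3*m" using blk_sub[OF m i] x(2) by auto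
  then have "x < 3" using x(1) unfolding Ext_def by auto
  then show ?thesis using blk_apex x(2) by blast
qed

lemma Cns_mem: "b \<in> Cns m \<Longrightarrow> \<exists>i a. i < 3 \<and> a < m \<and> b = blk m i a"
  unfolding Cns_def by auto

lemma all_lin:
  assumes m: "5 \<le> m" and b: "b \<in> insert (Ext m) (Cns m)" and b': "b' \<in> insert (Ext m) (Cns m)"
    and xy: "x \<noteq> y" "x \<in> b" "y \<in> b" "x \<in> b'" "y \<in> b'"
  shows "b = b'"
proof -
  have mp: "0 < m" using m by simp
  have ext_case: False if Q: "c \<in> Cns m" "x \<in> c" "y \<in> c" "x \<in> Ext m" "y \<in> Ext m" for c
  proof -
    obtain i a where ia: "i < 3" "a < m" "c = blk m i a" using Cns_mem[OF Q(1)] by blast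
    have "x = i" using Ext_not_blk[OF mp ia(1) Q(4)] Q(2) ia(3) by simp
    moreover have "y = i" using Ext_not_blk[OF mp ia(1) Q(5)] Q(3) ia(3) by simp
    ultimately show False using xy(1) by simp
  qed
  show ?thesis
  proof (cases "b = Ext m")
    case True
    show ?thesis
    proof (cases "b' = Ext m")
      case True then show ?thesis using \<open>b = Ext m\<close> by simp
    next
      case False
      then have "b' \<in> Cns m" using b' by simp
      then show ?thesis using ext_case[of b'] xy True by simp
    qed
  next
    case False
    then have bC: "b \<in> Cns m" using b by simp
    show ?thesis
    proof (cases "b' = Ext m")
      case True
      then show ?thesis using ext_case[OF bC] xy by simp
    next
      case False
      then have "b' \<in> Cns m" using b' by simp
      then obtain j c where jc: "j < 3" "c < m" "b' = blk m j c" using Cns_mem by blast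
      obtain i a where ia: "i < 3" "a < m" "b = blk m i a" using Cns_mem[OF bC] by blast
      have "i = j \<and> a = c" using blk_lin[OF m ia(1) jc(1) ia(2) jc(2) xy(1)] xy ia(3) jc(3) by simp
      then show ?thesis using ia(3) jc(3) by simp
    qed
  qed
qed

lemma fin_Cns: "finite (Cns m)" unfolding Cns_def by simp

lemma pack:
  assumes m: "5 \<le> m" and sub: "BB \<subseteq> insert (Ext m) (Cns m)" and inv: "\<forall>b\<in>BB. b \<subseteq> {..<v}"
  shows "is_packing v 4 BB"
  unfolding is_packing_def
proof (intro conjI allI impI ballI)
  fix b assume "b \<in> BB"
  then show "b \<subseteq> {..<v}" using inv by simp
  have "b \<in> insert (Ext m) (Cns m)" using \<open>b \<in> BB\<close> sub by auto
  then show "card b = 4"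
  proof
    assume "b = Ext m" then show ?thesis by (simp add: Ext_card)
  next
    assume "b \<in> Cns m"
    then obtain i a where "i < 3" "a < m" "b = blk m i a" using Cns_mem by blast
    then show ?thesis using blk_card m by simp
  qed
next
  fix x y :: nat assume "x \<noteq> y"
  have fBB: "finite BB" using finite_subset[OF sub] fin_Cns by simp
  have "card {b\<in>BB. x \<in> b \<and> y \<in> b} \<le> Suc 0"
  proof (subst card_le_Suc0_iff_eq)
    show "finite {b\<in>BB. x \<in> b \<and> y \<in> b}" using fBB by simp
    show "\<forall>a1\<in>{b\<in>BB. x \<in> b \<and> y \<in> b}. \<forall>a2\<in>{b\<in>BB. x \<in> b \<and> y \<in> b}. a1 = a2"
    proof (intro ballI)
      fix a1 a2 assume a1: "a1 \<in> {b\<in>BB. x \<in> b \<and> y \<in> b}" and a2: "a2 \<in> {b\<in>BB. x \<in> b \<and> y \<in> b}"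
      have m1: "a1 \<in> insert (Ext m) (Cns m)" using a1 sub by blast
      have m2: "a2 \<in> insert (Ext m) (Cns m)" using a2 sub by blast
      have "x \<in> a1" "y \<in> a1" "x \<in> a2" "y \<in> a2" using a1 a2 by simp_all
      then show "a1 = a2" by (rule all_lin[OF m m1 m2 \<open>x \<noteq> y\<close>])
    qed
  qed
  then show "card {b\<in>BB. x \<in> b \<and> y \<in> b} \<le> 1" by simp
qed

lemma card_Cns: assumes m: "5 \<le> m" shows "card (Cns m) = 3 * m"
proof -
  have "inj_on (\<lambda>(i,a). blk m i a) ({..<3} \<times> {..<m})"
  proof (rule inj_onI, clarsimp)
    fix i a j c assume h: "i < 3" "a < m" "j < 3" "c < m" "blk m i a = blk m j c"
    have x: "i \<in> blk m i a" unfolding mem_blk by simp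
    have y: "3 + a \<in> blk m i a" unfolding mem_blk using h(2)
      by (intro disjI2 exI[of _ 0]) simp
    have "i \<noteq> 3 + a" using h(1) by simp
    have x': "i \<in> blk m j c" using x h(5) by simp
    have y': "3 + a \<in> blk m j c" using y h(5) by simp
    show "i = j \<and> a = c" by (rule blk_lin[OF m h(1) h(3) h(2) h(4) \<open>i \<noteq> 3 + a\<close> x y x' y'])
  qed
  then show ?thesis unfolding Cns_def by (simp add: card_image)
qed

lemma Ext_notin: "0 < m \<Longrightarrow> Ext m \<notin> Cns m"
proof
  assume m: "0 < m" and "Ext m \<in> Cns m"
  then obtain i a where ia: "i < 3" "a < m" "Ext m = blk m i a" using Cns_mem by blast
  have "0 \<in> blk m i a" "1 \<in> blk m i a" using ia(3) unfolding Ext_def by auto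
  then have "0 = i" "1 = i" using blk_apex by auto
  then show False by simp
qed

lemma maxppc:
  assumes m: "7 \<le> m" and sub: "BB \<subseteq> insert (Ext m) (Cns m)" and CB: "Cns m \<subseteq> BB"
  shows "max_ppc_size_is BB 3"
  unfolding max_ppc_size_is_def
proof
  let ?P = "{blk m 0 0, blk m 1 1, blk m 2 2}"
  have mem0: "blk m 0 0 \<in> Cns m" unfolding Cns_def using m
    by (intro image_eqI[of _ _ "(0,0)"]) simp_all
  have mem1: "blk m 1 1 \<in> Cns m" unfolding Cns_def using m
    by (intro image_eqI[of _ _ "(1,1)"]) simp_all
  have mem2: "blk m 2 2 \<in> Cns m" unfolding Cns_def using m
    by (intro image_eqI[of _ _ "(2,2)"]) simp_all
  note mem = mem0 mem1 mem2
  have e: "blk m 0 0 = {0, 3, 3 + m, 3 + 2*m}" "blk m 1 1 = {1, 4, 5 + m, 6 + 2*m}"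
    "blk m 2 2 = {2, 5, 7 + m, 9 + 2*m}"
    unfolding blk_explicit using m by simp_all
  have d1: "disjnt (blk m 0 0) (blk m 1 1)" unfolding e disjnt_def using m by simp
  have d2: "disjnt (blk m 0 0) (blk m 2 2)" unfolding e disjnt_def using m by simp
  have d3: "disjnt (blk m 1 1) (blk m 2 2)" unfolding e disjnt_def using m by simp
  have d': "disjnt (blk m 1 1) (blk m 0 0)" "disjnt (blk m 2 2) (blk m 0 0)" "disjnt (blk m 2 2) (blk m 1 1)"
    by (rule disjnt_sym[OF d1], rule disjnt_sym[OF d2], rule disjnt_sym[OF d3])
  have pw: "pairwise disjnt ?P"
  proof (rule pairwiseI)
    fix x y assume "x \<in> ?P" "y \<in> ?P" "x \<noteq> y"
    then show "disjnt x y" using d1 d2 d3 d' by blast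
  qed
  have z: "0 \<in> blk m 0 0" "1 \<in> blk m 1 1" "2 \<in> blk m 2 2" unfolding mem_blk by simp_all
  have n1: "blk m 0 0 \<noteq> blk m 1 1" using z(1) blk_apex[of 0 m 1 1] by auto
  have n2: "blk m 0 0 \<noteq> blk m 2 2" using z(1) blk_apex[of 0 m 2 2] by auto
  have n3: "blk m 1 1 \<noteq> blk m 2 2" using z(2) blk_apex[of 1 m 2 2] by auto
  have cP: "card ?P = 3" using n1 n2 n3 by simp
  have sP: "?P \<subseteq> BB" using mem CB by blast
  show "\<exists>P. is_ppc BB P \<and> card P = 3" unfolding is_ppc_def
    by (rule exI[of _ ?P]) (use sP pw cP in simp)
next
  show "\<not> (\<exists>P. is_ppc BB P \<and> card P = 3 + 1)"
  proof
    assume "\<exists>P. is_ppc BB P \<and> card P = 3 + 1"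
    then obtain P where P: "P \<subseteq> BB" "pairwise disjnt P" "card P = 4" unfolding is_ppc_def by auto
    have "\<forall>b\<in>P. b \<inter> {0,1,2} \<noteq> {}"
    proof
      fix b assume "b \<in> P"
      then have "b \<in> insert (Ext m) (Cns m)" using P sub by auto
      then show "b \<inter> {0,1,2} \<noteq> {}"
      proof
        assume "b = Ext m" then show ?thesis unfolding Ext_def by auto
      next
        assume "b \<in> Cns m"
        then obtain i a where "i < 3" "b = blk m i a" using Cns_mem by blast
        then have "i \<in> b" "i \<in> {0,1,2::nat}" by (auto simp: mem_blk)
        then show ?thesis by blast
      qed
    qed
    then have "card P \<le> card {0,1,2::nat}" using pigeon[OF _ _ P(2), of "{0,1,2::nat}"] by simp
    then show False using P(3) by simp
  qed
qed



lemma wit1: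
  assumes m: "7 \<le> m" and v: "3 + 3*m \<le> v"
  shows "is_packing v 4 (Cns m) \<and> max_ppc_size_is (Cns m) 3"
proof
  show "is_packing v 4 (Cns m)"
  proof (rule pack)
    show "5 \<le> m" using m by simp
    show "Cns m \<subseteq> insert (Ext m) (Cns m)" by auto
    show "\<forall>b\<in>Cns m. b \<subseteq> {..<v}"
    proof
      fix b assume "b \<in> Cns m"
      then obtain i a where "i < 3" "b = blk m i a" using Cns_mem by blast
      then have "b \<subseteq> {..<3+3*m}" using blk_sub[of m i a] m by simp
      then show "b \<subseteq> {..<v}" using v by auto
    qed
  qed
  show "max_ppc_size_is (Cns m) 3" by (rule maxppc[OF m]) auto
qed

lemma wit2:
  assumes m: "7 \<le> m" and v: "4 + 3*m \<le> v"
  shows "is_packing v 4 (insert (Ext m) (Cns m)) \<and> max_ppc_size_is (insert (Ext m) (Cns m)) 3"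
proof
  show "is_packing v 4 (insert (Ext m) (Cns m))"
  proof (rule pack)
    show "5 \<le> m" using m by simp
    show "insert (Ext m) (Cns m) \<subseteq> insert (Ext m) (Cns m)" by auto
    show "\<forall>b\<in>insert (Ext m) (Cns m). b \<subseteq> {..<v}"
    proof
      fix b assume "b \<in> insert (Ext m) (Cns m)"
      then show "b \<subseteq> {..<v}"
      proof
        assume "b = Ext m" then show ?thesis using Ext_sub[of m] v by auto
      next
        assume "b \<in> Cns m"
        then obtain i a where "i < 3" "b = blk m i a" using Cns_mem by blast
        then have "b \<subseteq> {..<3+3*m}" using blk_sub[of m i a] m by simp
        then show "b \<subseteq> {..<v}" using v by auto
      qed
    qed
  qed
  show "max_ppc_size_is (insert (Ext m) (Cns m)) 3" by (rule maxppc[OF m]) auto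
qed

theorem theorem4p3:
  fixes v :: nat
  assumes "v \<ge> 147"
  shows "beta 3 v 4 \<le> v - 2 \<and>
         (v mod 3 \<in> {0, 1} \<longrightarrow> beta 3 v 4 \<ge> v - 3) \<and>
         (v mod 3 = 2 \<longrightarrow> beta 3 v 4 \<ge> v - 5)"
proof -
  define S where "S = {card BB | BB. is_packing v 4 BB \<and> max_ppc_size_is BB 3}"
  have beta_eq: "beta 3 v 4 = Max S" unfolding beta_def S_def by simp
  have "S \<subseteq> card ` Pow (Pow {..<v})" unfolding S_def is_packing_def by auto
  then have finS: "finite S" by (rule finite_subset) simp
  have in1: "3*m \<in> S" if "7 \<le> m" "3 + 3*m \<le> v" for m
  proof -
    have "card (Cns m) = 3*m" using card_Cns[of m] that by simp
    then show ?thesis unfolding S_def using wit1[OF that]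
      by (intro CollectI exI[of _ "Cns m"]) simp
  qed
  have in2: "3*m + 1 \<in> S" if "7 \<le> m" "4 + 3*m \<le> v" for m
  proof -
    have "card (insert (Ext m) (Cns m)) = 3*m + 1"
      using card_Cns[of m] that Ext_notin[of m] fin_Cns[of m] by simp
    then show ?thesis unfolding S_def using wit2[OF that]
      by (intro CollectI exI[of _ "insert (Ext m) (Cns m)"]) simp
  qed
  define m2 where "m2 = (v - 5) div 3"
  have m2: "7 \<le> m2" "3 + 3*m2 \<le> v" unfolding m2_def using assms by auto
  have ne: "S \<noteq> {}" using in1[OF m2] by auto
  have up: "Max S \<le> v - 2"
  proof (rule Max.boundedI[OF finS ne])
    fix s assume "s \<in> S"
    then obtain BB where "s = card BB" "is_packing v 4 BB" "max_ppc_size_is BB 3" unfolding S_def by blast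
    then show "s \<le> v - 2" using upper assms by simp
  qed
  have low01: "v - 3 \<le> Max S" if "v mod 3 \<in> {0,1}"
  proof (cases "v mod 3 = 0")
    case True
    define m where "m = (v - 3) div 3"
    have "7 \<le> m" "3 + 3*m \<le> v" unfolding m_def using assms True by auto
    moreover have "3*m = v - 3" unfolding m_def using assms True by presburger
    ultimately show ?thesis using in1 finS by (metis Max_ge)
  next
    case False
    then have "v mod 3 = 1" using that by simp
    define m where "m = (v - 4) div 3"
    have "7 \<le> m" "4 + 3*m \<le> v" unfolding m_def using assms \<open>v mod 3 = 1\<close> by auto
    moreover have "3*m + 1 = v - 3" unfolding m_def using assms \<open>v mod 3 = 1\<close> by presburger
    ultimately show ?thesis using in2 finS by (metis Max_ge)
  qed
  have low2: "v - 5 \<le> Max S" if "v mod 3 = 2"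
  proof -
    have "3*m2 = v - 5" unfolding m2_def using that assms by presburger
    then show ?thesis using in1[OF m2] finS by (metis Max_ge)
  qed
  show ?thesis unfolding beta_eq using up low01 low2 by auto
qed

end
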